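(* Let $n,d\in\mathbb N$, $\tau\in(0,n]$, $\sigma>0$, and let $v:\mathbb R^n\to\mathbb R^d$ be continuous. Suppose that for every $E\subset\mathbb R^n$ with $\mathcal H^\tau(E)=0$ and every $\varepsilon>0$ there exists a family of compact sets $\{D_i\}_{i\in\mathbb N}$ with $E\subset\bigcup_iD_i$, $\sum_i[\operatorname{diam}D_i]^\tau<\varepsilon$ and $\sum_i[\operatorname{diam}v(D_i)]^\sigma<\varepsilon$. Then $v$ has the $(\tau,\sigma)$-$N_*$-property: for every $q\in[0,\sigma]$ and every $E\subset\mathbb R^n$ with $\mathcal H^\tau(E)=0$, $$\mathcal H^{\tau(1-\frac q\sigma)}(E\cap v^{-1}(y))=0\quad\text{for }\mathcal H^q\text{-almost all }y\in\mathbb R^d.$$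
   Context: $\mathcal H^s$ denotes the $s$-dimensional Hausdorff measure; $\mathcal H^0$ is the counting measure. *)

theory Defs
  imports "HOL-Analysis.Analysis"
begin

text \<open>Contribution of one covering set to the s-dimensional Hausdorff content:
  (diam C)^s, with the conventions that the empty set contributes 0 and that
  (diam C)^0 = 1 for nonempty C (so that H^0 is the counting measure).
  The normalising constant is omitted: it does not affect null sets.\<close>
definition hcontent :: "real \<Rightarrow> 'a::metric_space set \<Rightarrow> ennreal" where
  "hcontent s C = (if C = {} then 0 else if s = 0 then 1 else ennreal (diameter C powr s))"

definition hausdorff_pre :: "real \<Rightarrow> real \<Rightarrow> 'a::metric_space set \<Rightarrow> ennreal" where
  "hausdorff_pre s \<delta> E =
     (INF C \<in> {C :: nat \<Rightarrow> 'a set. (\<forall>i. bounded (C i) \<and> diameter (C i) < \<delta>) \<and> E \<subseteq> (\<Union>i. C i)}.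
        (\<Sum>i. hcontent s (C i)))"

definition hausdorff :: "real \<Rightarrow> 'a::metric_space set \<Rightarrow> ennreal" where
  "hausdorff s E = (SUP \<delta> \<in> {0<..}. hausdorff_pre s \<delta> E)"

definition N_star_property :: "real \<Rightarrow> real \<Rightarrow> ('a::metric_space \<Rightarrow> 'b::metric_space) \<Rightarrow> bool" where
  "N_star_property \<tau> \<sigma> v \<longleftrightarrow>
     (\<forall>q \<in> {0..\<sigma>}. \<forall>E. hausdorff \<tau> E = 0 \<longrightarrow>
        hausdorff q {y. hausdorff (\<tau> * (1 - q / \<sigma>)) (E \<inter> v -` {y}) \<noteq> 0} = 0)"

end

theory Submission
  imports Defs "HOL-Analysis.Analysis"
begin


lemma hcontent_pos: "0 < s \<Longrightarrow> hcontent s C = ennreal (diameter C powr s)"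
  by (auto simp: hcontent_def)

lemma term_le_suminf: "(f i :: ennreal) \<le> (\<Sum>j. f j)"
  by (metis ennreal_suminf_lessD not_le order_less_irrefl)

definition nullcov :: "real \<Rightarrow> 'a::metric_space set \<Rightarrow> bool" where
  "nullcov s E \<longleftrightarrow> (\<forall>\<delta>>0. \<forall>\<eta>>0. \<exists>C. (\<forall>i. bounded (C i) \<and> diameter (C i) < \<delta>) \<and> E \<subseteq> (\<Union>i. C i) \<and> (\<Sum>i. hcontent s (C i)) < ennreal \<eta>)"

lemma pre_zero_iff:
  "hausdorff_pre s \<delta> E = 0 \<longleftrightarrow>
   (\<forall>\<eta>>0. \<exists>C. (\<forall>i. bounded (C i) \<and> diameter (C i) < \<delta>) \<and> E \<subseteq> (\<Union>i. C i) \<and> (\<Sum>i. hcontent s (C i)) < ennreal \<eta>)"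
proof
  assume h: "hausdorff_pre s \<delta> E = 0"
  show "\<forall>\<eta>>0. \<exists>C. (\<forall>i. bounded (C i) \<and> diameter (C i) < \<delta>) \<and> E \<subseteq> (\<Union>i. C i) \<and> (\<Sum>i. hcontent s (C i)) < ennreal \<eta>"
  proof (intro allI impI)
    fix \<eta> :: real assume "\<eta> > 0"
    then have "hausdorff_pre s \<delta> E < ennreal \<eta>" using h by simp
    then show "\<exists>C. (\<forall>i. bounded (C i) \<and> diameter (C i) < \<delta>) \<and> E \<subseteq> (\<Union>i. C i) \<and> (\<Sum>i. hcontent s (C i)) < ennreal \<eta>"
      unfolding hausdorff_pre_def by (auto simp: INF_less_iff)
  qed
next
  assume h: "\<forall>\<eta>>0. \<exists>C. (\<forall>i. bounded (C i) \<and> diameter (C i) < \<delta>) \<and> E \<subseteq> (\<Union>i. C i) \<and> (\<Sum>i. hcontent s (C i)) < ennreal \<eta>"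
  have "hausdorff_pre s \<delta> E \<le> ennreal \<eta>" if "\<eta> > 0" for \<eta>
  proof -
    obtain C where "(\<forall>i. bounded (C i) \<and> diameter (C i) < \<delta>)" "E \<subseteq> (\<Union>i. C i)" "(\<Sum>i. hcontent s (C i)) < ennreal \<eta>"
      using h \<open>\<eta>>0\<close> by blast
    then show ?thesis unfolding hausdorff_pre_def
      by (intro INF_lower2[of C] less_imp_le) auto
  qed
  then show "hausdorff_pre s \<delta> E = 0"
    by (metis ennreal_le_epsilon add_0 le_zero_eq zero_le)
qed

lemma hausdorff_zero_iff: "hausdorff s E = 0 \<longleftrightarrow> (\<forall>\<delta>>0. hausdorff_pre s \<delta> E = 0)"
  unfolding hausdorff_def by (auto simp: SUP_eq_iff bot_ennreal)

lemma null_iff: "hausdorff s E = 0 \<longleftrightarrow> nullcov s E"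
  unfolding hausdorff_zero_iff pre_zero_iff nullcov_def by blast

lemma null_mono: "hausdorff s F = 0 \<Longrightarrow> E \<subseteq> F \<Longrightarrow> hausdorff s E = 0"
  unfolding null_iff nullcov_def by (meson order_trans)

lemma null_Union:
  fixes A :: "nat \<Rightarrow> 'a::metric_space set"
  assumes "\<And>k. hausdorff s (A k) = 0"
  shows "hausdorff s (\<Union>k. A k) = 0"
  unfolding null_iff nullcov_def
proof (intro allI impI)
  fix \<delta> \<eta> :: real assume "\<delta> > 0" "\<eta> > 0"
  have "\<exists>C. (\<forall>i. bounded (C i) \<and> diameter (C i) < \<delta>) \<and> A k \<subseteq> (\<Union>i. C i) \<and> (\<Sum>i. hcontent s (C i)) < ennreal (\<eta> / 2 ^ (k+2))" for k
    using assms[of k] \<open>\<delta>>0\<close> \<open>\<eta>>0\<close> unfolding null_iff nullcov_def by simp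
  then obtain C where C: "\<And>k i. bounded (C k i) \<and> diameter (C k i) < \<delta>" "\<And>k. A k \<subseteq> (\<Union>i. C k i)"
    "\<And>k. (\<Sum>i. hcontent s (C k i)) < ennreal (\<eta> / 2 ^ (k+2))"
    by metis
  define C' where "C' n = (case prod_decode n of (k, i) \<Rightarrow> C k i)" for n
  have S: "(\<lambda>k. \<eta> / 2 ^ (k+2)) sums (\<eta> / 2)"
  proof -
    have "(\<lambda>k. \<eta> / 4 * (1/2) ^ k) sums (\<eta> / 4 * (1 / (1 - 1/2)))"
      by (intro sums_mult geometric_sums) auto
    then show ?thesis by (simp add: power_add field_simps)
  qed
  have "(\<Sum>n. hcontent s (C' n)) = (\<Sum>k. \<Sum>i. hcontent s (C k i))"
    unfolding C'_def by (rule suminf_ennreal_2dimen) (auto simp: case_prod_beta)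
  also have "\<dots> \<le> (\<Sum>k. ennreal (\<eta> / 2 ^ (k+2)))"
    by (intro suminf_le less_imp_le[OF C(3)]) auto
  also have "(\<Sum>k. ennreal (\<eta> / 2 ^ (k+2))) = ennreal (\<Sum>k. \<eta> / 2 ^ (k+2))"
    by (rule suminf_ennreal2) (use \<open>\<eta>>0\<close> S sums_summable in auto)
  also have "(\<Sum>k. \<eta> / 2 ^ (k+2)) = \<eta> / 2" using S sums_unique by metis
  also have "ennreal (\<eta> / 2) < ennreal \<eta>" using \<open>\<eta>>0\<close> by (simp add: ennreal_lessI)
  finally have "(\<Sum>n. hcontent s (C' n)) < ennreal \<eta>" .
  moreover have "(\<Union>k. A k) \<subseteq> (\<Union>n. C' n)"
  proof
    fix x assume "x \<in> (\<Union>k. A k)"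
    then obtain k i where "x \<in> C k i" using C(2) by blast
    then show "x \<in> (\<Union>n. C' n)" unfolding C'_def
      by (intro UN_I[of "prod_encode (k,i)"]) auto
  qed
  moreover have "\<forall>n. bounded (C' n) \<and> diameter (C' n) < \<delta>"
    unfolding C'_def using C(1) by (auto split: prod.splits)
  ultimately show "\<exists>C. (\<forall>i. bounded (C i) \<and> diameter (C i) < \<delta>) \<and> (\<Union>k. A k) \<subseteq> (\<Union>i. C i) \<and> (\<Sum>i. hcontent s (C i)) < ennreal \<eta>"
    by blast
qed

lemma H0_nonempty: assumes "A \<noteq> {}" shows "hausdorff 0 A \<noteq> 0"
proof
  assume "hausdorff 0 A = 0"
  then obtain C where C: "A \<subseteq> (\<Union>i. C i)" "(\<Sum>i. hcontent 0 (C i)) < ennreal 1"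
    unfolding null_iff nullcov_def by (meson zero_less_one)
  obtain i where "C i \<noteq> {}" using C(1) assms by blast
  then have "hcontent 0 (C i) = 1" by (simp add: hcontent_def)
  with C(2) term_le_suminf[of "\<lambda>i. hcontent 0 (C i)" i] show False by simp
qed

lemma pre1_nonzero:
  assumes "0 < s" "hausdorff s X \<noteq> 0"
  shows "hausdorff_pre s 1 X \<noteq> 0"
proof
  assume h: "hausdorff_pre s 1 X = 0"
  have "nullcov s X" unfolding nullcov_def
  proof (intro allI impI)
    fix \<delta> \<eta> :: real assume "\<delta> > 0" "\<eta> > 0"
    define \<eta>' where "\<eta>' = min \<eta> (\<delta> powr s)"
    have "\<eta>' > 0" using \<open>\<delta>>0\<close> \<open>\<eta>>0\<close> by (simp add: \<eta>'_def)
    then obtain C where C: "\<forall>i. bounded (C i) \<and> diameter (C i) < 1" "X \<subseteq> (\<Union>i. C i)" "(\<Sum>i. hcontent s (C i)) < ennreal \<eta>'"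
      using h unfolding pre_zero_iff by blast
    have "diameter (C i) < \<delta>" for i
    proof -
      have "ennreal (diameter (C i) powr s) < ennreal \<eta>'"
        using le_less_trans[OF term_le_suminf C(3)] hcontent_pos[OF assms(1)] by metis
      then have "diameter (C i) powr s < \<delta> powr s"
        unfolding \<eta>'_def by (simp add: ennreal_less_iff)
      then show ?thesis
        using \<open>\<delta>>0\<close> assms(1) powr_mono2[of s \<delta> "diameter (C i)"] by linarith
    qed
    moreover have "ennreal \<eta>' \<le> ennreal \<eta>" by (intro ennreal_leI) (simp add: \<eta>'_def)
    ultimately show "\<exists>C. (\<forall>i. bounded (C i) \<and> diameter (C i) < \<delta>) \<and> X \<subseteq> (\<Union>i. C i) \<and> (\<Sum>i. hcontent s (C i)) < ennreal \<eta>"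
      using C by (meson less_le_trans)
  qed
  with assms(2) show False unfolding null_iff by simp
qed



definition Wp :: "('k\<Rightarrow>'k) \<Rightarrow> (nat\<times>'k \<Rightarrow> ennreal) \<Rightarrow> nat \<Rightarrow> 'k \<Rightarrow> ennreal" where
  "Wp par w l k = (\<Sum>j<l. w (j, (par^^(l-j)) k))"
definition dsc :: "('k\<Rightarrow>'k) \<Rightarrow> nat\<times>'k \<Rightarrow> nat\<times>'k \<Rightarrow> bool" where
  "dsc par Q R \<longleftrightarrow> fst Q \<le> fst R \<and> (par^^(fst R - fst Q)) (snd R) = snd Q"
definition Sd :: "('k\<Rightarrow>'k) \<Rightarrow> (nat\<times>'k \<Rightarrow> ennreal) \<Rightarrow> (nat \<Rightarrow> ennreal) \<Rightarrow> nat\<times>'k \<Rightarrow> ennreal" where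
  "Sd par w c Q = infsum (\<lambda>R. w R * c (fst R)) {R. dsc par Q R}"
definition cand :: "('k\<Rightarrow>'k) \<Rightarrow> (nat\<times>'k \<Rightarrow> ennreal) \<Rightarrow> (nat \<Rightarrow> ennreal) \<Rightarrow> nat\<times>'k \<Rightarrow> bool" where
  "cand par w c Q \<longleftrightarrow> Wp par w (fst Q) (snd Q) < 1 \<and>
     (1 \<le> Wp par w (fst Q) (snd Q) + w Q \<or> c (fst Q) * (1 - Wp par w (fst Q) (snd Q)) \<le> Sd par w c Q)"
definition alive :: "('k\<Rightarrow>'k) \<Rightarrow> (nat\<times>'k \<Rightarrow> ennreal) \<Rightarrow> (nat \<Rightarrow> ennreal) \<Rightarrow> nat\<times>'k \<Rightarrow> bool" where
  "alive par w c Q \<longleftrightarrow> Wp par w (fst Q) (snd Q) < 1 \<and> (\<forall>j<fst Q. \<not> cand par w c (j, (par^^(fst Q - j)) (snd Q)))"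
definition SelT :: "('k\<Rightarrow>'k) \<Rightarrow> (nat\<times>'k \<Rightarrow> ennreal) \<Rightarrow> (nat \<Rightarrow> ennreal) \<Rightarrow> (nat\<times>'k) set" where
  "SelT par w c = {Q. alive par w c Q \<and> cand par w c Q}"

lemma enn_summable[simp]: "(f::_ \<Rightarrow> ennreal) summable_on A"
  by (simp add: nonneg_summable_on_complete)

lemma infsum_subset_enn: "A \<subseteq> B \<Longrightarrow> infsum (f::_ \<Rightarrow> ennreal) A \<le> infsum f B"
  by (rule infsum_mono_neutral) auto

lemma dsc_refl: "dsc par Q Q" by (simp add: dsc_def)

lemma dsc_trans: "dsc par Q R \<Longrightarrow> dsc par R U \<Longrightarrow> dsc par Q U"
proof -
  assume a: "dsc par Q R" "dsc par R U"
  then have "fst U - fst Q = (fst R - fst Q) + (fst U - fst R)" unfolding dsc_def by auto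
  then have "(par^^(fst U - fst Q)) (snd U) = (par^^(fst R - fst Q)) ((par^^(fst U - fst R)) (snd U))"
    by (simp add: funpow_add)
  then show ?thesis using a unfolding dsc_def by auto
qed

lemma dsc_child: "par k' = snd Q \<Longrightarrow> dsc par Q (Suc (fst Q), k')"
  by (simp add: dsc_def)

lemma dsc_same_level: "dsc par Q R \<Longrightarrow> fst Q = fst R \<Longrightarrow> Q = R"
  by (simp add: dsc_def prod_eq_iff)

lemma dsc_level_unique: "dsc par Q1 R \<Longrightarrow> dsc par Q2 R \<Longrightarrow> fst Q1 = fst Q2 \<Longrightarrow> Q1 = Q2"
  by (simp add: dsc_def prod_eq_iff)

lemma par_funpow: "par ((par ^^ n) x) = (par ^^ Suc n) x" by simp

lemma dsc_strict:
  assumes "dsc par Q R" "R \<noteq> Q"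
  shows "fst Q < fst R" "par ((par^^(fst R - Suc (fst Q))) (snd R)) = snd Q"
    "dsc par (Suc (fst Q), (par^^(fst R - Suc (fst Q))) (snd R)) R"
proof -
  have "fst Q \<le> fst R" using assms(1) by (simp add: dsc_def)
  moreover have "fst Q \<noteq> fst R" using assms dsc_same_level[of par Q R] by auto
  ultimately show lt: "fst Q < fst R" by simp
  then have "Suc (fst R - Suc (fst Q)) = fst R - fst Q" by simp
  then show "par ((par^^(fst R - Suc (fst Q))) (snd R)) = snd Q"
    using assms(1) unfolding dsc_def by (metis par_funpow)
  show "dsc par (Suc (fst Q), (par^^(fst R - Suc (fst Q))) (snd R)) R"
    using lt by (simp add: dsc_def)
qed

lemma Wp_child:
  assumes "par k' = k"
  shows "Wp par w (Suc l) k' = Wp par w l k + w (l, k)"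
proof -
  have "Wp par w (Suc l) k' = (\<Sum>j<l. w (j, (par^^(Suc l-j)) k')) + w (l, (par^^(Suc l - l)) k')"
    unfolding Wp_def by simp
  also have "(\<Sum>j<l. w (j, (par^^(Suc l-j)) k')) = Wp par w l k"
    unfolding Wp_def
  proof (intro sum.cong refl)
    fix j assume "j \<in> {..<l}"
    then have "Suc l - j = Suc (l - j)" by auto
    then show "w (j, (par^^(Suc l-j)) k') = w (j, (par^^(l-j)) k)"
      using assms by (simp add: funpow_Suc_right del: funpow.simps)
  qed
  finally show ?thesis using assms by simp
qed

lemma alive_child:
  assumes "alive par w c Q" "\<not> cand par w c Q" "par k' = snd Q"
  shows "alive par w c (Suc (fst Q), k')"
proof -
  have W: "Wp par w (Suc (fst Q)) k' = Wp par w (fst Q) (snd Q) + w Q"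
    using Wp_child[of par k' "snd Q" w "fst Q"] assms(3) by simp
  have "Wp par w (fst Q) (snd Q) < 1" using assms(1) alive_def by blast
  then have "Wp par w (Suc (fst Q)) k' < 1" using assms(2) W unfolding cand_def by auto
  moreover have "\<not> cand par w c (j, (par^^(Suc (fst Q) - j)) k')" if "j < Suc (fst Q)" for j
  proof (cases "j = fst Q")
    case True
    then show ?thesis using assms by (simp add: prod_eq_iff)
  next
    case False
    then have "j < fst Q" using that by simp
    then have "Suc (fst Q) - j = Suc (fst Q - j)" by simp
    then have "(par^^(Suc (fst Q) - j)) k' = (par^^(fst Q - j)) (snd Q)"
      using assms(3) by (simp add: funpow_Suc_right del: funpow.simps)
    then show ?thesis using assms(1) \<open>j < fst Q\<close> unfolding alive_def by simp
  qed
  ultimately show ?thesis unfolding alive_def by simp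
qed

lemma SelT_strict_desc:
  assumes "Q \<in> SelT par w c" "dsc par Q R" "R \<noteq> Q"
  shows "R \<notin> SelT par w c"
proof
  assume "R \<in> SelT par w c"
  have lt: "fst Q < fst R" using dsc_strict[OF assms(2,3)] by simp
  have "(fst Q, (par^^(fst R - fst Q)) (snd R)) = Q" using assms(2) by (simp add: dsc_def prod_eq_iff)
  moreover have "\<forall>j<fst R. \<not> cand par w c (j, (par^^(fst R - j)) (snd R))"
    using \<open>R \<in> SelT par w c\<close> unfolding SelT_def alive_def by blast
  ultimately have "\<not> cand par w c Q" using lt by force
  then show False using assms(1) unfolding SelT_def by simp
qed

lemma Sd_ge: "w Q * c (fst Q) \<le> Sd par w c Q"
proof -
  have "infsum (\<lambda>R. w R * c (fst R)) {Q} \<le> Sd par w c Q"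
    unfolding Sd_def by (rule infsum_subset_enn) (auto simp: dsc_refl)
  then show ?thesis by simp
qed

lemma Sd_children:
  assumes "finite G" "\<And>ch. ch \<in> G \<Longrightarrow> fst ch = Suc (fst Q) \<and> par (snd ch) = snd Q"
  shows "w Q * c (fst Q) + (\<Sum>ch\<in>G. Sd par w c ch) \<le> Sd par w c Q"
proof -
  let ?f = "\<lambda>R. w R * c (fst R)"
  have e1: "(\<Sum>ch\<in>G. Sd par w c ch) = infsum ?f (\<Union>ch\<in>G. {R. dsc par ch R})"
    unfolding Sd_def
  proof (rule sum_infsum)
    show "finite G" by fact
    fix a a' assume "a \<in> G" "a' \<in> G" "a \<noteq> a'"
    then show "{R. dsc par a R} \<inter> {R. dsc par a' R} = {}"
      using assms(2) dsc_level_unique[of par a _ a'] by (metis (lifting) disjoint_iff mem_Collect_eq)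
  qed auto
  have e2: "infsum ?f {Q} = w Q * c (fst Q)" by simp
  have e3: "infsum ?f ({Q} \<union> (\<Union>ch\<in>G. {R. dsc par ch R})) = infsum ?f {Q} + infsum ?f (\<Union>ch\<in>G. {R. dsc par ch R})"
  proof (rule infsum_Un_disjoint)
    show "{Q} \<inter> (\<Union>ch\<in>G. {R. dsc par ch R}) = {}"
    proof (rule ccontr)
      assume "{Q} \<inter> (\<Union>ch\<in>G. {R. dsc par ch R}) \<noteq> {}"
      then obtain ch where "ch \<in> G" "dsc par ch Q" by blast
      then have "fst ch \<le> fst Q" by (simp add: dsc_def)
      then show False using assms(2)[OF \<open>ch \<in> G\<close>] by simp
    qed
  qed auto
  have e4: "infsum ?f ({Q} \<union> (\<Union>ch\<in>G. {R. dsc par ch R})) \<le> Sd par w c Q"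
    unfolding Sd_def
  proof (rule infsum_subset_enn)
    show "{Q} \<union> (\<Union>ch\<in>G. {R. dsc par ch R}) \<subseteq> {R. dsc par Q R}"
    proof
      fix R assume "R \<in> {Q} \<union> (\<Union>ch\<in>G. {R. dsc par ch R})"
      then show "R \<in> {R. dsc par Q R}"
      proof
        assume "R \<in> {Q}" then show ?thesis by (simp add: dsc_refl)
      next
        assume "R \<in> (\<Union>ch\<in>G. {R. dsc par ch R})"
        then obtain ch where ch: "ch \<in> G" "dsc par ch R" by blast
        have "dsc par Q ch" using assms(2)[OF ch(1)] dsc_child[of par "snd ch" Q] by (metis prod.collapse)
        then show ?thesis using ch(2) dsc_trans by blast
      qed
    qed
  qed
  have "w Q * c (fst Q) + (\<Sum>ch\<in>G. Sd par w c ch) = infsum ?f ({Q} \<union> (\<Union>ch\<in>G. {R. dsc par ch R}))"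
    by (subst e3, subst e2, subst e1, rule refl)
  then show ?thesis using e4 by (rule ord_eq_le_trans)
qed



lemma alg_real:
  fixes x t m cc S Sc :: real
  assumes "0 \<le> m" "m < t" "0 \<le> x" "x*(t - m) \<le> Sc" "m*cc + Sc \<le> S" "S \<le> cc*t" "0 \<le> cc"
  shows "x*t \<le> S"
proof -
  have "x*t*(t-m) = t*(x*(t-m))" by (simp add: algebra_simps)
  also have "\<dots> \<le> t*(S - m*cc)" using assms by (intro mult_left_mono) auto
  also have "\<dots> \<le> S*(t-m)"
  proof -
    have "m*S \<le> m*(cc*t)" using assms by (intro mult_left_mono) auto
    then show ?thesis by (simp add: algebra_simps)
  qed
  finally show ?thesis using assms by (simp add: mult_le_cancel_right)
qed

lemma enn_fin: "(a::ennreal) \<noteq> \<infinity> \<Longrightarrow> \<exists>r. 0 \<le> r \<and> a = ennreal r"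
  by (cases a) auto

lemma alg_enn:
  fixes X t m cc S Sc :: ennreal
  assumes "m < t" "t \<le> 1" "X*(t - m) \<le> Sc" "m*cc + Sc \<le> S" "S < cc*t" "cc \<noteq> \<infinity>"
  shows "X*t \<le> S"
proof -
  have tfin: "t \<noteq> \<infinity>" using assms(2) by (auto simp: top_unique)
  have mfin: "m \<noteq> \<infinity>" using assms(1) by auto
  have Sfin: "S \<noteq> \<infinity>" using assms(5) by auto
  have Scfin: "Sc \<noteq> \<infinity>" using assms(4) Sfin by (auto simp: top_unique)
  obtain t' where t': "0 \<le> t'" "t = ennreal t'" using enn_fin[OF tfin] by blast
  obtain m' where m': "0 \<le> m'" "m = ennreal m'" using enn_fin[OF mfin] by blast
  obtain c' where c': "0 \<le> c'" "cc = ennreal c'" using enn_fin[OF assms(6)] by blast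
  obtain S' where S': "0 \<le> S'" "S = ennreal S'" using enn_fin[OF Sfin] by blast
  obtain Sc' where Sc': "0 \<le> Sc'" "Sc = ennreal Sc'" using enn_fin[OF Scfin] by blast
  have mt: "m' < t'" using assms(1) t' m' by (simp add: ennreal_less_iff)
  have tm: "t - m = ennreal (t' - m')" using t' m' by (simp add: ennreal_minus)
  show ?thesis
  proof (cases "X = \<infinity>")
    case True
    then have "X*(t-m) = \<infinity>" using mt tm by (simp add: ennreal_mult_top)
    then show ?thesis using assms(3) Scfin by (simp add: top_unique)
  next
    case False
    obtain x where x: "0 \<le> x" "X = ennreal x" using enn_fin[OF False] by blast
    have h3: "x*(t'-m') \<le> Sc'" using assms(3) x tm Sc' mt
      by (simp add: ennreal_mult[symmetric] ennreal_le_iff)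
    have h4: "m'*c' + Sc' \<le> S'" using assms(4) m' c' Sc' S'
      by (simp add: ennreal_mult[symmetric] ennreal_plus[symmetric] del: ennreal_plus)
    have h5: "S' \<le> c'*t'" using assms(5) c' t' S'
      by (simp add: ennreal_mult[symmetric] ennreal_less_iff)
    have "x*t' \<le> S'" by (rule alg_real[OF m'(1) mt x(1) h3 h4 h5 c'(1)])
    then show ?thesis using x t' S' by (simp add: ennreal_mult[symmetric])
  qed
qed


lemma sel_step:
  assumes cfin: "\<And>l. c l \<noteq> \<infinity>"
    and al: "alive par w c Q" and fin: "finite F" and FS: "F \<subseteq> SelT par w c"
    and Fd: "\<forall>R\<in>F. dsc par Q R"
    and IH: "\<And>g Fg. fst g = Suc (fst Q) \<Longrightarrow> par (snd g) = snd Q \<Longrightarrow> alive par w c g \<Longrightarrow>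
        Fg \<subseteq> F \<Longrightarrow> (\<forall>R\<in>Fg. dsc par g R) \<Longrightarrow>
        (\<Sum>R\<in>Fg. c (fst R)) * (1 - Wp par w (fst g) (snd g)) \<le> Sd par w c g"
  shows "(\<Sum>R\<in>F. c (fst R)) * (1 - Wp par w (fst Q) (snd Q)) \<le> Sd par w c Q"
proof -
  define W where "W = Wp par w (fst Q) (snd Q)"
  have W1: "W < 1" using al unfolding alive_def W_def by simp
  show ?thesis
  proof (cases "cand par w c Q")
    case True
    then have QS: "Q \<in> SelT par w c" using al by (simp add: SelT_def)
    have "F \<subseteq> {Q}"
    proof
      fix R assume "R \<in> F"
      then have "R \<in> SelT par w c" "dsc par Q R" using FS Fd by auto
      then show "R \<in> {Q}" using SelT_strict_desc[OF QS] by blast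
    qed
    then have "(\<Sum>R\<in>F. c (fst R)) \<le> c (fst Q)"
      by (cases "F = {}") (simp_all add: subset_singleton_iff)
    then have "(\<Sum>R\<in>F. c (fst R)) * (1 - W) \<le> c (fst Q) * (1 - W)"
      by (rule mult_right_mono) simp
    also have "c (fst Q) * (1 - W) \<le> Sd par w c Q"
    proof (cases "1 \<le> W + w Q")
      case True
      then have "1 - W \<le> w Q" by (simp add: ennreal_minus_le_iff)
      then have "c (fst Q) * (1 - W) \<le> c (fst Q) * w Q" by (rule mult_left_mono) simp
      also have "\<dots> \<le> Sd par w c Q" using Sd_ge[of w Q c par] by (simp add: mult.commute)
      finally show ?thesis .
    next
      case False
      then show ?thesis using \<open>cand par w c Q\<close> unfolding cand_def W_def by simp
    qed
    finally show ?thesis unfolding W_def .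
  next
    case nc: False
    have notQ: "Q \<notin> F" using FS nc by (auto simp: SelT_def)
    define ch where "ch R = (Suc (fst Q), (par^^(fst R - Suc (fst Q))) (snd R))" for R
    have chR: "fst (ch R) = Suc (fst Q)" "par (snd (ch R)) = snd Q" "dsc par (ch R) R" if "R \<in> F" for R
    proof -
      have "dsc par Q R" "R \<noteq> Q" using that Fd notQ by auto
      from dsc_strict[OF this] show "fst (ch R) = Suc (fst Q)" "par (snd (ch R)) = snd Q" "dsc par (ch R) R"
        by (auto simp: ch_def)
    qed
    define G where "G = ch ` F"
    have finG: "finite G" using fin by (simp add: G_def)
    have Gp: "fst g = Suc (fst Q) \<and> par (snd g) = snd Q" if "g \<in> G" for g
      using that chR unfolding G_def by auto
    define X where "X g = (\<Sum>R\<in>{R\<in>F. ch R = g}. c (fst R))" for g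
    have sumX: "(\<Sum>R\<in>F. c (fst R)) = (\<Sum>g\<in>G. X g)"
      unfolding X_def G_def by (rule sum.image_gen[OF fin])
    have nc': "\<not> 1 \<le> W + w Q" "\<not> c (fst Q) * (1 - W) \<le> Sd par w c Q"
      using nc W1 unfolding cand_def W_def by auto
    have Wg: "Wp par w (fst g) (snd g) = W + w Q" if "g \<in> G" for g
      using Wp_child[of par "snd g" "snd Q" w "fst Q"] Gp[OF that] unfolding W_def by simp
    have Xg: "X g * ((1 - W) - w Q) \<le> Sd par w c g" if "g \<in> G" for g
    proof -
      have "alive par w c g"
        using alive_child[OF al nc, of "snd g"] Gp[OF that] by (metis prod.collapse)
      moreover have "\<forall>R\<in>{R\<in>F. ch R = g}. dsc par g R" using chR by auto
      ultimately have "X g * (1 - Wp par w (fst g) (snd g)) \<le> Sd par w c g"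
        unfolding X_def using IH[of g "{R\<in>F. ch R = g}"] Gp[OF that] by auto
      then show ?thesis using Wg[OF that] by (simp add: diff_add_eq_diff_diff_swap_ennreal)
    qed
    have A: "(\<Sum>g\<in>G. X g) * ((1 - W) - w Q) \<le> (\<Sum>g\<in>G. Sd par w c g)"
      unfolding sum_distrib_right by (rule sum_mono) (rule Xg)
    have B: "w Q * c (fst Q) + (\<Sum>g\<in>G. Sd par w c g) \<le> Sd par w c Q"
      by (rule Sd_children[OF finG Gp])
    have m_lt: "w Q < 1 - W"
      using nc'(1) W1 by (subst less_diff_eq_ennreal) (auto simp: add.commute)
    have "(\<Sum>g\<in>G. X g) * (1 - W) \<le> Sd par w c Q"
    proof (rule alg_enn[OF m_lt _ A _ _ cfin])
      show "1 - W \<le> 1" by (rule diff_le_self_ennreal)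
      show "w Q * c (fst Q) + (\<Sum>g\<in>G. Sd par w c g) \<le> Sd par w c Q" by (rule B)
      show "Sd par w c Q < c (fst Q) * (1 - W)" using nc'(2) by simp
    qed
    then show ?thesis unfolding sumX W_def .
  qed
qed

lemma sel_bound:
  assumes cfin: "\<And>l. c l \<noteq> \<infinity>"
  shows "L \<le> fst Q + n \<Longrightarrow> alive par w c Q \<Longrightarrow> finite F \<Longrightarrow> F \<subseteq> SelT par w c \<Longrightarrow>
    (\<forall>R\<in>F. dsc par Q R \<and> fst R \<le> L) \<Longrightarrow>
    (\<Sum>R\<in>F. c (fst R)) * (1 - Wp par w (fst Q) (snd Q)) \<le> Sd par w c Q"
proof (induction n arbitrary: Q F)
  case (0 Q F)
  show ?case
  proof (rule sel_step[OF cfin 0(2,3,4)])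
    show "\<forall>R\<in>F. dsc par Q R" using 0(5) by auto
    fix g Fg assume a: "fst g = Suc (fst Q)" "Fg \<subseteq> F" "\<forall>R\<in>Fg. dsc par g R"
    have "Fg = {}"
    proof (rule ccontr)
      assume "Fg \<noteq> {}"
      then obtain R where "R \<in> Fg" by blast
      then have "fst g \<le> fst R" "fst R \<le> L" using a 0(5) by (auto simp: dsc_def)
      then show False using a(1) 0(1) by simp
    qed
    then show "(\<Sum>R\<in>Fg. c (fst R)) * (1 - Wp par w (fst g) (snd g)) \<le> Sd par w c g" by simp
  qed
next
  case (Suc n Q F)
  show ?case
  proof (rule sel_step[OF cfin Suc(3,4,5)])
    show "\<forall>R\<in>F. dsc par Q R" using Suc(6) by auto
    fix g Fg assume a: "fst g = Suc (fst Q)" "par (snd g) = snd Q" "alive par w c g" "Fg \<subseteq> F" "\<forall>R\<in>Fg. dsc par g R"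
    show "(\<Sum>R\<in>Fg. c (fst R)) * (1 - Wp par w (fst g) (snd g)) \<le> Sd par w c g"
    proof (rule Suc(1))
      show "L \<le> fst g + n" using Suc(2) a(1) by simp
      show "finite Fg" using a(4) Suc(4) finite_subset by blast
      show "Fg \<subseteq> SelT par w c" using a(4) Suc(5) by blast
      show "\<forall>R\<in>Fg. dsc par g R \<and> fst R \<le> L" using a(4,5) Suc(6) by blast
    qed (rule a(3))
  qed
qed



lemma alive_root: "alive par w c (0, k)"
  by (simp add: alive_def Wp_def)

lemma sel_total:
  assumes cfin: "\<And>l. c l \<noteq> \<infinity>"
  shows "infsum (\<lambda>R. c (fst R)) (SelT par w c) \<le> infsum (\<lambda>R. w R * c (fst R)) UNIV"
proof (rule infsum_le_finite_sums)
  show "(\<lambda>R. c (fst R)) summable_on SelT par w c" by simp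
  fix F assume fin: "finite F" and FS: "F \<subseteq> SelT par w c"
  define L where "L = Max (insert 0 (fst ` F))"
  have FL: "fst R \<le> L" if "R \<in> F" for R
    unfolding L_def using fin that by (intro Max_ge) auto
  define rt where "rt R = (0::nat, (par^^(fst R)) (snd R))" for R
  define G where "G = rt ` F"
  define X where "X g = (\<Sum>R\<in>{R\<in>F. rt R = g}. c (fst R))" for g
  have sumX: "(\<Sum>R\<in>F. c (fst R)) = (\<Sum>g\<in>G. X g)"
    unfolding X_def G_def by (rule sum.image_gen[OF fin])
  have Xg: "X g \<le> Sd par w c g" if "g \<in> G" for g
  proof -
    have g: "g = (0, snd g)" using that by (auto simp: G_def rt_def)
    have "X g * (1 - Wp par w (fst g) (snd g)) \<le> Sd par w c g"
      unfolding X_def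
    proof (rule sel_bound[OF cfin, of L g L])
      show "L \<le> fst g + L" by simp
      show "alive par w c g" by (subst g) (rule alive_root)
      show "finite {R \<in> F. rt R = g}" using fin by simp
      show "{R \<in> F. rt R = g} \<subseteq> SelT par w c" using FS by auto
      show "\<forall>R\<in>{R \<in> F. rt R = g}. dsc par g R \<and> fst R \<le> L"
        using FL by (auto simp: dsc_def rt_def)
    qed
    moreover have "fst g = 0" using g by (metis fst_conv)
    ultimately show ?thesis by (simp add: Wp_def)
  qed
  have "(\<Sum>g\<in>G. Sd par w c g) = infsum (\<lambda>R. w R * c (fst R)) (\<Union>g\<in>G. {R. dsc par g R})"
    unfolding Sd_def
  proof (rule sum_infsum)
    show "finite G" using fin by (simp add: G_def)
    fix a a' assume "a \<in> G" "a' \<in> G" "a \<noteq> a'"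
    moreover have "fst a = fst a'" using \<open>a \<in> G\<close> \<open>a' \<in> G\<close> by (auto simp: G_def rt_def)
    ultimately show "{R. dsc par a R} \<inter> {R. dsc par a' R} = {}"
      using dsc_level_unique[of par a _ a'] by blast
  qed simp
  also have "\<dots> \<le> infsum (\<lambda>R. w R * c (fst R)) UNIV" by (rule infsum_subset_enn) simp
  finally have "(\<Sum>g\<in>G. Sd par w c g) \<le> infsum (\<lambda>R. w R * c (fst R)) UNIV" .
  moreover have "(\<Sum>g\<in>G. X g) \<le> (\<Sum>g\<in>G. Sd par w c g)" by (rule sum_mono) (rule Xg)
  ultimately show "(\<Sum>R\<in>F. c (fst R)) \<le> infsum (\<lambda>R. w R * c (fst R)) UNIV"
    unfolding sumX by (rule order_trans[rotated])
qed

lemma chain_anc: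
  assumes chain: "\<And>l y. par (key (Suc l) y) = key l y"
  shows "j \<le> l \<Longrightarrow> (par^^(l-j)) (key l y) = key j y"
proof (induction l)
  case 0 then show ?case by simp
next
  case (Suc l)
  show ?case
  proof (cases "j = Suc l")
    case True then show ?thesis by simp
  next
    case False
    then have "j \<le> l" "Suc l - j = Suc (l - j)" using Suc.prems by auto
    then show ?thesis using Suc.IH chain by (simp add: funpow_Suc_right del: funpow.simps)
  qed
qed

lemma sel_cover:
  assumes chain: "\<And>l y. par (key (Suc l) y) = key l y"
    and big: "1 < infsum (\<lambda>l. w (l, key l y)) UNIV"
  shows "\<exists>l. (l, key l y) \<in> SelT par w c"
proof -
  have Wk: "Wp par w l (key l y) = (\<Sum>j<l. w (j, key j y))" for l
    unfolding Wp_def by (intro sum.cong refl) (simp add: chain_anc[where par=par and key=key, OF chain])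
  have ex: "\<exists>l. 1 \<le> (\<Sum>j<Suc l. w (j, key j y))"
  proof (rule ccontr)
    assume "\<not> ?thesis"
    then have lt: "(\<Sum>j<Suc l. w (j, key j y)) < 1" for l by (simp add: not_le)
    have "infsum (\<lambda>l. w (l, key l y)) UNIV \<le> 1"
    proof (rule infsum_le_finite_sums)
      fix F :: "nat set" assume "finite F"
      then have "F \<subseteq> {..<Suc (Max (insert 0 F))}"
        by (auto simp: less_Suc_eq_le)
      then have "sum (\<lambda>l. w (l, key l y)) F \<le> (\<Sum>j<Suc (Max (insert 0 F)). w (j, key j y))"
        by (intro sum_mono2) auto
      then show "sum (\<lambda>l. w (l, key l y)) F \<le> 1" using lt[of "Max (insert 0 F)"] by simp
    qed simp
    then show False using big by simp
  qed
  define l0 where "l0 = (LEAST l. 1 \<le> (\<Sum>j<Suc l. w (j, key j y)))"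
  have l0: "1 \<le> (\<Sum>j<Suc l0. w (j, key j y))" unfolding l0_def using ex by (rule LeastI_ex)
  have l0': "(\<Sum>j<l0. w (j, key j y)) < 1"
  proof (cases l0)
    case 0 then show ?thesis by simp
  next
    case (Suc l1)
    then have "l1 < l0" by simp
    then have "\<not> 1 \<le> (\<Sum>j<Suc l1. w (j, key j y))" unfolding l0_def by (rule not_less_Least)
    then show ?thesis using Suc by (simp add: not_le)
  qed
  have cl0: "cand par w c (l0, key l0 y)"
    unfolding cand_def using l0 l0' by (simp add: Wk)
  define j0 where "j0 = (LEAST j. cand par w c (j, key j y))"
  have cj0: "cand par w c (j0, key j0 y)" unfolding j0_def using cl0 by (rule LeastI)
  have "alive par w c (j0, key j0 y)"
    unfolding alive_def
  proof (intro conjI allI impI)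
    show "Wp par w (fst (j0, key j0 y)) (snd (j0, key j0 y)) < 1" using cj0 by (simp add: cand_def)
    fix j assume "j < fst (j0, key j0 y)"
    then have "j < j0" "j \<le> j0" by auto
    have "\<not> cand par w c (j, key j y)" using \<open>j < j0\<close> unfolding j0_def by (rule not_less_Least)
    then show "\<not> cand par w c (j, (par ^^ (fst (j0, key j0 y) - j)) (snd (j0, key j0 y)))"
      using chain_anc[where par=par and key=key, OF chain \<open>j \<le> j0\<close>] by simp
  qed
  then show ?thesis using cj0 by (auto simp: SelT_def)
qed



lemma floor_half: "\<lfloor>(x::real) * 2\<rfloor> div 2 = \<lfloor>x\<rfloor>"
proof -
  have a: "2 * \<lfloor>x\<rfloor> \<le> \<lfloor>x * 2\<rfloor>" by (simp add: le_floor_iff)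
  have b: "\<lfloor>x * 2\<rfloor> < 2 * \<lfloor>x\<rfloor> + 2" by (simp add: floor_less_iff) linarith
  from a b show ?thesis by presburger
qed

definition kf :: "nat \<Rightarrow> real^'d \<Rightarrow> int^'d" where
  "kf m y = (\<chi> j. \<lfloor>y$j * 2^m\<rfloor>)"
definition parv :: "int^'d \<Rightarrow> int^'d" where
  "parv k = (\<chi> j. k$j div 2)"

lemma parv_kf: "parv (kf (Suc m) y) = kf m y"
proof -
  have "\<lfloor>y$j * 2^Suc m\<rfloor> div 2 = \<lfloor>y$j * 2^m\<rfloor>" for j
    using floor_half[of "y$j * 2^m"] by (simp add: algebra_simps)
  then show ?thesis by (simp add: parv_def kf_def vec_eq_iff)
qed

lemma kf_same_close:
  fixes y z :: "real^'d"
  assumes "kf m y = kf m z"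
  shows "norm (y - z) \<le> real CARD('d) * (1/2)^m"
proof -
  have h: "\<bar>(y - z)$j\<bar> \<le> (1/2)^m" for j
  proof -
    have "\<lfloor>y$j * 2^m\<rfloor> = \<lfloor>z$j * 2^m\<rfloor>" using assms by (simp add: kf_def vec_eq_iff)
    then have "\<bar>y$j * 2^m - z$j * 2^m\<bar> < 1" by linarith
    then have "\<bar>y$j - z$j\<bar> * 2^m < 1" by (simp add: abs_mult left_diff_distrib[symmetric])
    then show ?thesis by (simp add: power_one_over field_simps)
  qed
  have "(\<Sum>j\<in>UNIV. \<bar>(y - z)$j\<bar>) \<le> (\<Sum>j\<in>(UNIV::'d set). (1/2)^m)" by (rule sum_mono) (rule h)
  then show ?thesis using norm_le_l1_cart[of "y - z"] by simp
qed

lemma kf_neighbor: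
  fixes y p :: "real^'d"
  assumes "norm (y - p) \<le> (1/2)^m"
  shows "\<bar>kf m y $ j - kf m p $ j\<bar> \<le> 1"
proof -
  have "\<bar>y$j - p$j\<bar> \<le> (1/2)^m" using component_le_norm_cart[of "y - p" j] assms by simp
  then have "\<bar>y$j - p$j\<bar> * 2^m \<le> 1" by (simp add: power_one_over field_simps)
  then have "\<bar>y$j * 2^m - p$j * 2^m\<bar> \<le> 1" by (simp add: abs_mult left_diff_distrib[symmetric])
  then show ?thesis unfolding kf_def by simp linarith
qed

lemma young:
  fixes A B \<theta> :: real
  assumes "0 \<le> A" "0 \<le> B" "0 \<le> \<theta>" "\<theta> \<le> 1"
  shows "A powr (1-\<theta>) * B powr \<theta> \<le> (1-\<theta>)*A + \<theta>*B"
proof (cases "A = 0 \<or> B = 0")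
  case True
  then show ?thesis using assms by auto
next
  case False
  then have pos: "A > 0" "B > 0" using assms by auto
  have "A powr (1-\<theta>) * B powr \<theta> = exp ((1 - \<theta>) *\<^sub>R ln A + \<theta> *\<^sub>R ln B)"
    using pos by (simp add: powr_def exp_add mult.commute)
  also have "\<dots> \<le> (1-\<theta>) * exp (ln A) + \<theta> * exp (ln B)"
    by (rule convex_onD[OF exp_convex]) (use assms in auto)
  also have "\<dots> = (1-\<theta>)*A + \<theta>*B" using pos by simp
  finally show ?thesis .
qed

lemma level_exists:
  fixes \<beta> :: real
  assumes "0 < \<beta>" "\<beta> \<le> (1/2)^L0"
  shows "\<exists>m\<ge>L0. \<beta> \<le> (1/2)^m \<and> (1/2)^(Suc m) < \<beta>"
proof -
  obtain n where n: "(1/2::real)^n < \<beta>" using real_arch_pow_inv[OF assms(1), of "1/2"] by auto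
  have "(1/2::real)^(Suc n) \<le> (1/2)^n" by simp
  then have ex: "(1/2::real)^(Suc n) < \<beta>" using n by linarith
  define m where "m = (LEAST m. (1/2::real)^(Suc m) < \<beta>)"
  have m1: "(1/2::real)^(Suc m) < \<beta>" unfolding m_def using ex by (rule LeastI)
  have m2: "\<beta> \<le> (1/2)^m"
  proof (cases m)
    case 0 then show ?thesis using assms(2) power_le_one[of "1/2::real" L0] by simp
  next
    case (Suc m')
    then have "m' < m" by simp
    then have "\<not> (1/2::real)^(Suc m') < \<beta>" unfolding m_def by (rule not_less_Least)
    then show ?thesis using Suc by simp
  qed
  have m3: "L0 \<le> m"
  proof (rule ccontr)
    assume "\<not> L0 \<le> m"
    then have "Suc m \<le> L0" by simp
    then have "(1/2::real)^L0 \<le> (1/2)^(Suc m)" by (rule power_decreasing) auto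
    then show False using m1 assms(2) by linarith
  qed
  show ?thesis using m1 m2 m3 by blast
qed



lemma suminf_infsum_enn: "(\<Sum>n. f n) = infsum (f::nat \<Rightarrow> ennreal) UNIV"
proof -
  have "(f has_sum infsum f UNIV) UNIV" by (rule has_sum_infsum) simp
  then have "f sums infsum f UNIV" by (rule has_sum_imp_sums)
  then show ?thesis by (rule sums_unique[symmetric])
qed

lemma sum_le_infsum_enn: "finite J \<Longrightarrow> J \<subseteq> A \<Longrightarrow> sum (f::_ \<Rightarrow> ennreal) J \<le> infsum f A"
  using infsum_subset_enn[of J A f] by (simp add: infsum_finite)

lemma infsum_sum_enn:
  assumes "finite Fn"
  shows "infsum (\<lambda>x. \<Sum>R\<in>Fn. (f R x :: ennreal)) A = (\<Sum>R\<in>Fn. infsum (f R) A)"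
  using assms
proof (induction Fn rule: finite_induct)
  case empty then show ?case by simp
next
  case (insert R Fn)
  have "infsum (\<lambda>x. \<Sum>R\<in>insert R Fn. f R x) A = infsum (\<lambda>x. f R x + (\<Sum>R\<in>Fn. f R x)) A"
    using insert by simp
  also have "\<dots> = infsum (f R) A + infsum (\<lambda>x. \<Sum>R\<in>Fn. f R x) A"
    by (rule infsum_add) simp_all
  finally show ?case using insert by simp
qed

lemma infsum_cmult_enn:
  assumes "c \<noteq> (\<infinity>::ennreal)"
  shows "infsum (\<lambda>x. f x * c) A = infsum f A * c"
proof (cases "c = 0")
  case True then show ?thesis by simp
next
  case False
  have "(f has_sum infsum f A) A" by (rule has_sum_infsum) simp
  then have "(sum f \<longlongrightarrow> infsum f A) (finite_subsets_at_top A)" by (simp add: has_sum_def)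
  then have "((\<lambda>F. sum f F * c) \<longlongrightarrow> infsum f A * c) (finite_subsets_at_top A)"
    by (rule tendsto_mult_ennreal[OF _ tendsto_const]) (use assms False in auto)
  then have "((\<lambda>x. f x * c) has_sum (infsum f A * c)) A"
    by (simp add: has_sum_def sum_distrib_right)
  then show ?thesis by (rule infsumI)
qed

lemma infsum_cmult_enn':
  assumes "c \<noteq> (\<infinity>::ennreal)"
  shows "infsum (\<lambda>x. c * f x) A = c * infsum f A"
  using infsum_cmult_enn[OF assms, of f A] by (simp add: mult.commute)

lemma ex_finite_gt:
  assumes "(b::ennreal) < infsum f A"
  shows "\<exists>J. finite J \<and> J \<subseteq> A \<and> b < sum f J"
proof (rule ccontr)
  assume "\<not> ?thesis"
  then have "infsum f A \<le> b" by (intro infsum_le_finite_sums) (auto simp: not_less)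
  then show False using assms by simp
qed

lemma tree_cover:
  fixes par :: "'k \<Rightarrow> 'k" and key :: "nat \<Rightarrow> 'y \<Rightarrow> 'k" and c :: "nat \<Rightarrow> ennreal" and w :: "nat \<times> 'k \<Rightarrow> ennreal"
  assumes chain: "\<And>l y. par (key (Suc l) y) = key l y" and cfin: "\<And>l. c l \<noteq> \<infinity>"
  shows "\<exists>Sel. (\<forall>y. 1 < infsum (\<lambda>l. w (l, key l y)) UNIV \<longrightarrow> (\<exists>l. (l, key l y) \<in> Sel)) \<and>
     infsum (\<lambda>R. c (fst R)) Sel \<le> infsum (\<lambda>R. w R * c (fst R)) UNIV"
proof (rule exI[of _ "SelT par w c"], intro conjI allI impI)
  show "infsum (\<lambda>R. c (fst R)) (SelT par w c) \<le> infsum (\<lambda>R. w R * c (fst R)) UNIV"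
    by (rule sel_total[OF cfin])
  fix y assume "1 < infsum (\<lambda>l. w (l, key l y)) UNIV"
  then show "\<exists>l. (l, key l y) \<in> SelT par w c" by (rule sel_cover[where par=par and key=key, OF chain])
qed

lemma bounded_by_dist:
  fixes S :: "'a::real_normed_vector set"
  assumes "\<And>x y. x \<in> S \<Longrightarrow> y \<in> S \<Longrightarrow> norm (x - y) \<le> r"
  shows "bounded S"
proof (cases "S = {}")
  case False
  then obtain x0 where "x0 \<in> S" by blast
  then have "S \<subseteq> cball x0 r" using assms by (auto simp: dist_norm)
  then show ?thesis using bounded_cball bounded_subset by blast
qed simp

definition Nb :: "(int^'d) set" where "Nb = {e. \<forall>j. \<bar>e$j\<bar> \<le> 1}"

lemma finite_Nb: "finite (Nb :: (int^'d) set)"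
proof -
  have "Nb \<subseteq> (\<lambda>f. \<chi> j. f j) ` (Pi\<^sub>E (UNIV::'d set) (\<lambda>_. {-1..1::int}))"
  proof
    fix e :: "int^'d" assume "e \<in> Nb"
    then have "(\<lambda>j. e$j) \<in> Pi\<^sub>E UNIV (\<lambda>_. {-1..1})" by (auto simp: Nb_def abs_le_iff)
    then show "e \<in> (\<lambda>f. \<chi> j. f j) ` (Pi\<^sub>E (UNIV::'d set) (\<lambda>_. {-1..1::int}))"
      by (intro image_eqI[of _ _ "\<lambda>j. e$j"]) auto
  qed
  moreover have "finite (Pi\<^sub>E (UNIV::'d set) (\<lambda>_. {-1..1::int}))" by (intro finite_PiE) auto
  ultimately show ?thesis using finite_subset by blast
qed

lemma powr_less_imp_less:
  fixes x y s :: real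
  assumes "0 \<le> x" "0 \<le> y" "0 < s" "x powr s < y powr s"
  shows "x < y"
proof (rule ccontr)
  assume "\<not> x < y"
  then have "y powr s \<le> x powr s" using assms by (intro powr_mono2) auto
  then show False using assms(4) by simp
qed



lemma Fk_cover:
  fixes v :: "real^'n \<Rightarrow> real^'d" and E :: "(real^'n) set" and D :: "nat \<Rightarrow> (real^'n) set"
  assumes tau: "0 < \<tau>" and sig: "0 < \<sigma>" and q0: "0 < q" and q1: "q < \<sigma>"
    and cont: "continuous_on UNIV v"
    and Dc: "\<And>i. compact (D i)" and ED: "E \<subseteq> (\<Union>i. D i)"
    and Da: "(\<Sum>i. ennreal (diameter (D i) powr \<tau>)) < ennreal \<epsilon>"
    and Db: "(\<Sum>i. ennreal (diameter (v ` D i) powr \<sigma>)) < ennreal \<epsilon>"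
    and L0: "real CARD('d) * (1/2)^L0 < \<delta>"
    and e0: "0 < \<epsilon>" and e1: "\<epsilon> \<le> 1" and e2: "\<epsilon> \<le> ((1/2)^L0) powr \<sigma>"
    and e3: "real (card (Nb::(int^'d) set)) * (real (Suc k) * (2 * real CARD('d)) powr q) * (3 * \<epsilon>) < \<eta>"
  shows "\<exists>C. (\<forall>i. bounded (C i) \<and> diameter (C i) < \<delta>) \<and>
    {y. ennreal (1 / real (Suc k)) < hausdorff_pre (\<tau> * (1 - q/\<sigma>)) 1 (E \<inter> v -` {y})} \<subseteq> (\<Union>i. C i) \<and>
    (\<Sum>i. hcontent q (C i)) < ennreal \<eta>"
proof -
  define s where "s = \<tau> * (1 - q/\<sigma>)"
  have s0: "0 < s" using tau sig q1 by (simp add: s_def field_simps)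
  define T where "T = real (Suc k)"
  define dd where "dd = real CARD('d)"
  have dd1: "1 \<le> dd" by (simp add: dd_def)
  define a where "a i = diameter (D i)" for i
  define b where "b i = diameter (v ` D i)" for i
  define \<gamma> where "\<gamma> i = (\<epsilon> / 2^(i+1)) powr (1/\<sigma>)" for i :: nat
  define \<beta> where "\<beta> i = max (b i) (\<gamma> i)" for i
  have cimg: "compact (v ` D i)" for i
    by (rule compact_continuous_image[OF continuous_on_subset[OF cont subset_UNIV] Dc])
  have a0: "0 \<le> a i" for i unfolding a_def by (rule diameter_ge_0[OF compact_imp_bounded[OF Dc]])
  have b0: "0 \<le> b i" for i unfolding b_def by (rule diameter_ge_0[OF compact_imp_bounded[OF cimg]])
  have aeps: "a i powr \<tau> < \<epsilon>" for i
    using le_less_trans[OF term_le_suminf Da] unfolding a_def by (simp add: ennreal_less_iff)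
  have beps: "b i powr \<sigma> < \<epsilon>" for i
    using le_less_trans[OF term_le_suminf Db] unfolding b_def by (simp add: ennreal_less_iff)
  have a1: "a i < 1" for i
    using powr_less_imp_less[OF a0 _ tau, of 1 i] aeps[of i] e1 by simp
  have bL: "b i < (1/2)^L0" for i
    using powr_less_imp_less[OF b0 _ sig, of "(1/2)^L0" i] beps[of i] e2 by simp
  have g0: "0 < \<gamma> i" for i using e0 by (simp add: \<gamma>_def)
  have gpow: "\<gamma> i powr \<sigma> = \<epsilon> / 2^(i+1)" for i
    using e0 sig by (simp add: \<gamma>_def powr_powr)
  have gL: "\<gamma> i < (1/2)^L0" for i
  proof -
    have "(1::real) < 2^(i+1)" by (rule one_less_power) auto
    then have "\<epsilon> / 2^(i+1) < \<epsilon>" using e0 by (simp add: field_simps)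
    then have "\<gamma> i powr \<sigma> < ((1/2)^L0) powr \<sigma>" using gpow e2 by simp
    then show ?thesis using powr_less_imp_less[of "\<gamma> i" "(1/2)^L0" \<sigma>] g0[of i] sig by simp
  qed
  have be0: "0 < \<beta> i" for i using g0[of i] by (simp add: \<beta>_def)
  have beL: "\<beta> i \<le> (1/2)^L0" for i using bL[of i] gL[of i] by (simp add: \<beta>_def)
  have "\<forall>i. \<exists>m\<ge>L0. \<beta> i \<le> (1/2)^m \<and> (1/2)^(Suc m) < \<beta> i"
    using level_exists[OF be0 beL] by blast
  then obtain m where m: "\<And>i. L0 \<le> m i" "\<And>i. \<beta> i \<le> (1/2)^(m i)" "\<And>i. (1/2)^(Suc (m i)) < \<beta> i"
    using choice[of "\<lambda>i m. L0 \<le> m \<and> \<beta> i \<le> (1/2)^m \<and> (1/2)^(Suc m) < \<beta> i"] by blast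
  define lev where "lev i = m i - L0" for i
  have levm: "L0 + lev i = m i" for i using m(1)[of i] by (simp add: lev_def)
  define p where "p i = (SOME p. p \<in> v ` D i)" for i
  define N where "N i = (if v ` D i = {} then {} else (\<lambda>e. (lev i, kf (m i) (p i) + e)) ` (Nb::(int^'d) set))" for i
  define \<alpha> where "\<alpha> i = ennreal (T * a i powr s)" for i
  define w where "w R = infsum \<alpha> {i. R \<in> N i}" for R
  define c where "c l = ennreal ((dd * (1/2)^(L0 + l)) powr q)" for l
  define key where "key l y = kf (L0 + l) (y::real^'d)" for l y
  define cube where "cube R = {y. key (fst R) y = snd R}" for R
  have chain: "parv (key (Suc l) y) = key l y" for l y
    using parv_kf[of "L0 + l" y] by (simp add: key_def)
  have cfin: "c l \<noteq> \<infinity>" for l by (simp add: c_def)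
  obtain Sel where Sel: "\<And>y. 1 < infsum (\<lambda>l. w (l, key l y)) UNIV \<Longrightarrow> (\<exists>l. (l, key l y) \<in> Sel)"
    "infsum (\<lambda>R. c (fst R)) Sel \<le> infsum (\<lambda>R. w R * c (fst R)) UNIV"
    using tree_cover[where par=parv and key=key and c=c and w=w, OF chain cfin] by blast
  define C where "C n = (if n \<in> to_nat ` Sel then cube (from_nat n) else {})" for n
  have claim1: "1 < infsum (\<lambda>l. w (l, key l y)) UNIV"
    if h: "ennreal (1 / T) < hausdorff_pre s 1 (E \<inter> v -` {y})" for y
  proof -
    define I where "I = {i. y \<in> v ` D i}"
    define C' where "C' i = (if i \<in> I then D i else {})" for i
    have cov: "E \<inter> v -` {y} \<subseteq> (\<Union>i. C' i)"
    proof
      fix x assume x: "x \<in> E \<inter> v -` {y}"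
      then obtain i where "x \<in> D i" using ED by blast
      moreover have "v x = y" using x by simp
      ultimately have "i \<in> I" "x \<in> C' i" by (auto simp: I_def C'_def)
      then show "x \<in> (\<Union>i. C' i)" by blast
    qed
    have bdC: "\<forall>i. bounded (C' i) \<and> diameter (C' i) < 1"
      using compact_imp_bounded[OF Dc] a1 by (simp add: C'_def a_def)
    have "hausdorff_pre s 1 (E \<inter> v -` {y}) \<le> (\<Sum>i. hcontent s (C' i))"
      unfolding hausdorff_pre_def by (rule INF_lower) (use cov bdC in blast)
    also have "\<dots> = infsum (\<lambda>i. hcontent s (C' i)) UNIV" by (rule suminf_infsum_enn)
    also have "\<dots> = infsum (\<lambda>i. hcontent s (C' i)) I"
      by (rule infsum_cong_neutral) (auto simp: C'_def hcontent_def)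
    also have "\<dots> = infsum (\<lambda>i. ennreal (a i powr s)) I"
      by (rule infsum_cong) (simp add: C'_def hcontent_pos[OF s0] a_def)
    finally have Z: "ennreal (1/T) < infsum (\<lambda>i. ennreal (a i powr s)) I" using h by simp
    have T0: "0 < T" by (simp add: T_def)
    have "ennreal T * ennreal (1/T) = ennreal (T * (1/T))" by (rule ennreal_mult[symmetric]) (use T0 in auto)
    then have "(1::ennreal) = ennreal T * ennreal (1/T)" using T0 by simp
    also have "\<dots> < ennreal T * infsum (\<lambda>i. ennreal (a i powr s)) I"
      by (rule ennreal_mult_strict_left_mono[OF Z]) (use T0 in auto)
    also have "\<dots> = infsum (\<lambda>i. ennreal T * ennreal (a i powr s)) I"
      by (rule infsum_cmult_enn'[symmetric]) simp
    also have "\<dots> = infsum \<alpha> I"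
      by (rule infsum_cong) (unfold \<alpha>_def, rule ennreal_mult[symmetric], use T0 in auto)
    finally have "1 < infsum \<alpha> I" .
    from ex_finite_gt[OF this] obtain J where J: "finite J" "J \<subseteq> I" "1 < sum \<alpha> J" by blast
    have sub: "{i\<in>J. lev i = l} \<subseteq> {i. (l, key l y) \<in> N i}" for l
    proof
      fix i assume i: "i \<in> {i\<in>J. lev i = l}"
      then have yi: "y \<in> v ` D i" using J(2) by (auto simp: I_def)
      then have pi: "p i \<in> v ` D i" unfolding p_def by (rule someI)
      have "dist y (p i) \<le> b i"
        unfolding b_def by (rule diameter_bounded_bound[OF compact_imp_bounded[OF cimg] yi pi])
      also have "\<dots> \<le> \<beta> i" by (simp add: \<beta>_def)
      also have "\<dots> \<le> (1/2)^(m i)" by (rule m(2))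
      finally have "norm (y - p i) \<le> (1/2)^(m i)" by (simp add: dist_norm)
      then have eNb: "kf (m i) y - kf (m i) (p i) \<in> Nb"
        using kf_neighbor[of y "p i" "m i"] by (simp add: Nb_def)
      have "key l y = kf (m i) y" using i levm[of i] by (simp add: key_def)
      then have eq: "(l, key l y) = (lev i, kf (m i) (p i) + (kf (m i) y - kf (m i) (p i)))" using i by simp
      have "(l, key l y) \<in> (\<lambda>e. (lev i, kf (m i) (p i) + e)) ` Nb" by (rule image_eqI[where f="\<lambda>e. (lev i, kf (m i) (p i) + e)", OF eq eNb])
      moreover have "v ` D i \<noteq> {}" using yi by blast
      ultimately have "(l, key l y) \<in> N i" unfolding N_def by simp
      then show "i \<in> {i. (l, key l y) \<in> N i}" by simp
    qed
    have "sum \<alpha> J = (\<Sum>l\<in>lev ` J. sum \<alpha> {i\<in>J. lev i = l})" by (rule sum.image_gen[OF J(1)])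
    also have "\<dots> \<le> (\<Sum>l\<in>lev ` J. w (l, key l y))"
      unfolding w_def by (rule sum_mono, rule sum_le_infsum_enn) (use J(1) sub in auto)
    also have "\<dots> \<le> infsum (\<lambda>l. w (l, key l y)) UNIV" by (rule sum_le_infsum_enn) (use J(1) in auto)
    finally show ?thesis using J(3) by simp
  qed
  have Nfin: "finite (N i)" and Ncard: "card (N i) \<le> card (Nb::(int^'d) set)" and Nlev: "\<And>R. R \<in> N i \<Longrightarrow> fst R = lev i" for i
    using finite_Nb card_image_le[OF finite_Nb] by (auto simp: N_def split: if_splits)
  have claim2: "infsum (\<lambda>R. w R * c (fst R)) UNIV \<le> ennreal (real (card (Nb::(int^'d) set))) * infsum (\<lambda>i. \<alpha> i * c (lev i)) UNIV"
  proof (rule infsum_le_finite_sums)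
    show "(\<lambda>R. w R * c (fst R)) summable_on UNIV" by simp
    fix Fn :: "(nat \<times> (int^'d)) set" assume fin: "finite Fn"
    have wc: "w R * c (fst R) = infsum (\<lambda>i. if R \<in> N i then \<alpha> i * c (fst R) else 0) UNIV" for R
    proof -
      have "w R * c (fst R) = infsum (\<lambda>i. \<alpha> i * c (fst R)) {i. R \<in> N i}"
        unfolding w_def by (rule infsum_cmult_enn[symmetric]) (simp add: c_def)
      also have "\<dots> = infsum (\<lambda>i. if R \<in> N i then \<alpha> i * c (fst R) else 0) UNIV"
        by (rule infsum_cong_neutral) auto
      finally show ?thesis .
    qed
    have pt2: "(\<Sum>R\<in>Fn. if R \<in> N i then \<alpha> i * c (fst R) else 0) \<le> ennreal (real (card (Nb::(int^'d) set))) * (\<alpha> i * c (lev i))" for i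
    proof -
      have "(\<Sum>R\<in>Fn. if R \<in> N i then \<alpha> i * c (fst R) else 0) = (\<Sum>R\<in>Fn \<inter> N i. \<alpha> i * c (fst R))"
        using fin by (simp add: sum.inter_restrict)
      also have "\<dots> = (\<Sum>R\<in>Fn \<inter> N i. \<alpha> i * c (lev i))"
      proof (rule sum.cong[OF refl])
        fix R assume "R \<in> Fn \<inter> N i"
        then have "fst R = lev i" using Nlev[of R i] by blast
        then show "\<alpha> i * c (fst R) = \<alpha> i * c (lev i)" by simp
      qed
      also have "\<dots> = of_nat (card (Fn \<inter> N i)) * (\<alpha> i * c (lev i))" by simp
      also have "\<dots> \<le> of_nat (card (Nb::(int^'d) set)) * (\<alpha> i * c (lev i))"
      proof (rule mult_right_mono)
        have "card (Fn \<inter> N i) \<le> card (N i)" using Nfin[of i] by (intro card_mono) auto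
        then show "(of_nat (card (Fn \<inter> N i)) :: ennreal) \<le> of_nat (card (Nb::(int^'d) set))"
          using Ncard[of i] by simp
      qed simp
      finally show ?thesis by (simp add: ennreal_of_nat_eq_real_of_nat)
    qed
    have "(\<Sum>R\<in>Fn. w R * c (fst R)) = (\<Sum>R\<in>Fn. infsum (\<lambda>i. if R \<in> N i then \<alpha> i * c (fst R) else 0) UNIV)"
      by (simp add: wc)
    also have "\<dots> = infsum (\<lambda>i. \<Sum>R\<in>Fn. if R \<in> N i then \<alpha> i * c (fst R) else 0) UNIV"
      by (rule infsum_sum_enn[OF fin, symmetric])
    also have "\<dots> \<le> infsum (\<lambda>i. ennreal (real (card (Nb::(int^'d) set))) * (\<alpha> i * c (lev i))) UNIV"
      by (rule infsum_mono) (simp_all add: pt2)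
    also have "\<dots> = ennreal (real (card (Nb::(int^'d) set))) * infsum (\<lambda>i. \<alpha> i * c (lev i)) UNIV"
      by (rule infsum_cmult_enn') simp
    finally show "(\<Sum>R\<in>Fn. w R * c (fst R)) \<le> ennreal (real (card (Nb::(int^'d) set))) * infsum (\<lambda>i. \<alpha> i * c (lev i)) UNIV" .
  qed
  define K where "K = T * (2 * dd) powr q"
  have K0: "0 \<le> K" by (simp add: K_def T_def)
  have pt: "\<alpha> i * c (lev i) \<le> ennreal K * (ennreal (a i powr \<tau>) + ennreal (b i powr \<sigma>) + ennreal (\<epsilon> / 2^(i+1)))" for i
  proof -
    define \<theta> where "\<theta> = q / \<sigma>"
    have th: "0 \<le> \<theta>" "\<theta> \<le> 1" using q0 q1 sig by (auto simp: \<theta>_def)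
    have "(1/2::real)^(m i) = 2 * (1/2)^(Suc (m i))" by simp
    then have h1: "(1/2::real)^(m i) \<le> 2 * \<beta> i" using m(3)[of i] by linarith
    have h2: "(dd * (1/2)^(m i)) powr q \<le> (2 * dd) powr q * \<beta> i powr q"
    proof -
      have "(dd * (1/2)^(m i)) powr q \<le> (2 * dd * \<beta> i) powr q"
        using h1 dd1 q0 by (intro powr_mono2) (auto simp: mult.assoc mult.left_commute[of dd])
      also have "\<dots> = (2 * dd) powr q * \<beta> i powr q" using dd1 be0[of i] by (simp add: powr_mult)
      finally show ?thesis .
    qed
    have h3: "a i powr s * \<beta> i powr q \<le> a i powr \<tau> + \<beta> i powr \<sigma>"
    proof -
      have x1: "(a i powr \<tau>) powr (1 - \<theta>) = a i powr s" by (simp add: powr_powr s_def \<theta>_def)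
      have x2: "(\<beta> i powr \<sigma>) powr \<theta> = \<beta> i powr q" using sig by (simp add: powr_powr \<theta>_def)
      have x3: "(a i powr \<tau>) powr (1 - \<theta>) * (\<beta> i powr \<sigma>) powr \<theta> \<le> (1-\<theta>) * a i powr \<tau> + \<theta> * \<beta> i powr \<sigma>"
        by (rule young) (use th in auto)
      have x4: "(1-\<theta>) * a i powr \<tau> + \<theta> * \<beta> i powr \<sigma> \<le> a i powr \<tau> + \<beta> i powr \<sigma>"
        using th by (intro add_mono mult_left_le_one_le) auto
      show ?thesis using order_trans[OF x3 x4] unfolding x1 x2 .
    qed
    have h4: "\<beta> i powr \<sigma> \<le> b i powr \<sigma> + \<epsilon> / 2^(i+1)"
      using gpow[of i] e0 by (cases "b i \<le> \<gamma> i") (auto simp: \<beta>_def max_def)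
    have "\<alpha> i * c (lev i) = ennreal (T * a i powr s * (dd * (1/2)^(m i)) powr q)"
      unfolding \<alpha>_def c_def levm by (simp add: ennreal_mult[symmetric] T_def)
    also have "\<dots> \<le> ennreal (K * (a i powr \<tau> + b i powr \<sigma> + \<epsilon> / 2^(i+1)))"
    proof (rule ennreal_leI)
      have "T * a i powr s * (dd * (1/2)^(m i)) powr q \<le> T * a i powr s * ((2 * dd) powr q * \<beta> i powr q)"
        using h2 by (intro mult_left_mono) (auto simp: T_def)
      also have "\<dots> = K * (a i powr s * \<beta> i powr q)" by (simp add: K_def)
      also have "\<dots> \<le> K * (a i powr \<tau> + \<beta> i powr \<sigma>)" using h3 K0 by (rule mult_left_mono)
      also have "\<dots> \<le> K * (a i powr \<tau> + b i powr \<sigma> + \<epsilon> / 2^(i+1))" using h4 K0 by (intro mult_left_mono) auto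
      finally show "T * a i powr s * (dd * (1/2)^(m i)) powr q \<le> K * (a i powr \<tau> + b i powr \<sigma> + \<epsilon> / 2^(i+1))" .
    qed
    also have "\<dots> = ennreal K * (ennreal (a i powr \<tau>) + ennreal (b i powr \<sigma>) + ennreal (\<epsilon> / 2^(i+1)))"
      using K0 e0 by (simp add: ennreal_mult ennreal_plus[symmetric] del: ennreal_plus)
    finally show ?thesis .
  qed
  have geo: "(\<Sum>i. ennreal (\<epsilon> / 2^(i+1))) = ennreal \<epsilon>"
  proof -
    have S: "(\<lambda>i. \<epsilon> / 2^(i+1)) sums \<epsilon>"
    proof -
      have "(\<lambda>i. \<epsilon> / 2 * (1/2) ^ i) sums (\<epsilon> / 2 * (1 / (1 - 1/2)))"
        by (intro sums_mult geometric_sums) auto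
      then show ?thesis by (simp add: power_add field_simps)
    qed
    have "(\<Sum>i. ennreal (\<epsilon> / 2^(i+1))) = ennreal (\<Sum>i. \<epsilon> / 2^(i+1))"
      by (rule suminf_ennreal2) (use e0 S sums_summable in auto)
    then show ?thesis using S sums_unique by metis
  qed
  have claim3: "infsum (\<lambda>i. \<alpha> i * c (lev i)) UNIV \<le> ennreal (T * (2 * dd) powr q * (3 * \<epsilon>))"
  proof -
    have "infsum (\<lambda>i. \<alpha> i * c (lev i)) UNIV = (\<Sum>i. \<alpha> i * c (lev i))" by (rule suminf_infsum_enn[symmetric])
    also have "\<dots> \<le> (\<Sum>i. ennreal K * (ennreal (a i powr \<tau>) + ennreal (b i powr \<sigma>) + ennreal (\<epsilon> / 2^(i+1))))"
      by (rule suminf_le) (use pt in auto)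
    also have "\<dots> = ennreal K * ((\<Sum>i. ennreal (a i powr \<tau>)) + (\<Sum>i. ennreal (b i powr \<sigma>)) + (\<Sum>i. ennreal (\<epsilon> / 2^(i+1))))"
      by (simp add: suminf_add[symmetric])
    also have "\<dots> \<le> ennreal K * (ennreal \<epsilon> + ennreal \<epsilon> + ennreal \<epsilon>)"
      using Da Db unfolding a_def b_def geo by (intro mult_left_mono add_mono) auto
    also have "\<dots> = ennreal (T * (2 * dd) powr q * (3 * \<epsilon>))"
      using e0 K0 by (simp add: K_def ennreal_mult[symmetric] ennreal_plus[symmetric] del: ennreal_plus)
    finally show ?thesis .
  qed
  have cube_diam0: "norm (x - y) \<le> dd * (1/2)^(L0 + fst R)" if "x \<in> cube R" "y \<in> cube R" for x y R
  proof -
    have "kf (L0 + fst R) x = kf (L0 + fst R) y" using that by (simp add: cube_def key_def)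
    then show "norm (x - y) \<le> dd * (1/2)^(L0 + fst R)" using kf_same_close by (simp add: dd_def)
  qed
  have cube_diam: "norm (x - y) \<le> dd * (1/2)^L0" if "x \<in> cube R" "y \<in> cube R" for x y R
  proof -
    have "norm (x - y) \<le> dd * (1/2)^(L0 + fst R)" using cube_diam0[OF that] .
    also have "\<dots> \<le> dd * (1/2)^L0" using dd1 by (intro mult_left_mono power_decreasing) auto
    finally show ?thesis .
  qed
  have del0: "0 < \<delta>" using L0 le_less_trans[of 0 "real CARD('d) * (1/2)^L0"] by simp
  have cube_bd: "bounded (cube R) \<and> diameter (cube R) < \<delta>" for R
  proof
    show "bounded (cube R)" by (rule bounded_by_dist[OF cube_diam])
    have "diameter (cube R) \<le> dd * (1/2)^L0"
      by (rule diameter_le) (use cube_diam dd1 in auto)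
    then show "diameter (cube R) < \<delta>" using L0 by (simp add: dd_def)
  qed
  have G1: "\<forall>n. bounded (C n) \<and> diameter (C n) < \<delta>"
    using cube_bd del0 by (simp add: C_def)
  have G2: "{y. ennreal (1 / real (Suc k)) < hausdorff_pre (\<tau> * (1 - q/\<sigma>)) 1 (E \<inter> v -` {y})} \<subseteq> (\<Union>n. C n)"
  proof
    fix y assume "y \<in> {y. ennreal (1 / real (Suc k)) < hausdorff_pre (\<tau> * (1 - q/\<sigma>)) 1 (E \<inter> v -` {y})}"
    then have "ennreal (1 / T) < hausdorff_pre s 1 (E \<inter> v -` {y})" by (simp add: s_def T_def)
    then obtain l where l: "(l, key l y) \<in> Sel" using Sel(1) claim1 by blast
    then have "to_nat (l, key l y) \<in> to_nat ` Sel" by blast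
    moreover have "y \<in> cube (l, key l y)" by (simp add: cube_def)
    ultimately have "y \<in> C (to_nat (l, key l y))" by (simp add: C_def)
    then show "y \<in> (\<Union>n. C n)" by blast
  qed
  have hc: "hcontent q (cube R) \<le> c (fst R)" for R
  proof -
    have bd: "bounded (cube R)" using cube_bd by blast
    have "diameter (cube R) \<le> dd * (1/2)^(L0 + fst R)"
      by (rule diameter_le) (use cube_diam0 dd1 in auto)
    then have "diameter (cube R) powr q \<le> (dd * (1/2)^(L0 + fst R)) powr q"
      using q0 diameter_ge_0[OF bd] by (intro powr_mono2) auto
    then show ?thesis using q0 by (simp add: hcontent_pos c_def ennreal_leI)
  qed
  have G3: "(\<Sum>n. hcontent q (C n)) < ennreal \<eta>"
  proof -
    have "(\<Sum>n. hcontent q (C n)) = infsum (\<lambda>n. hcontent q (C n)) UNIV" by (rule suminf_infsum_enn)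
    also have "\<dots> = infsum (\<lambda>n. hcontent q (C n)) (to_nat ` Sel)"
      by (rule infsum_cong_neutral) (auto simp: C_def hcontent_def)
    also have "\<dots> = infsum (\<lambda>n. hcontent q (cube (from_nat n))) (to_nat ` Sel)"
      by (rule infsum_cong) (simp add: C_def)
    also have "\<dots> = infsum ((\<lambda>n. hcontent q (cube (from_nat n))) \<circ> to_nat) Sel"
      by (rule infsum_reindex) (simp add: inj_on_def)
    also have "\<dots> = infsum (\<lambda>R. hcontent q (cube R)) Sel" by (simp add: o_def)
    also have "\<dots> \<le> infsum (\<lambda>R. c (fst R)) Sel" by (rule infsum_mono) (simp_all add: hc)
    also have "\<dots> \<le> infsum (\<lambda>R. w R * c (fst R)) UNIV" by (rule Sel(2))
    also have "\<dots> \<le> ennreal (real (card (Nb::(int^'d) set))) * infsum (\<lambda>i. \<alpha> i * c (lev i)) UNIV" by (rule claim2)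
    also have "\<dots> \<le> ennreal (real (card (Nb::(int^'d) set))) * ennreal (T * (2 * dd) powr q * (3 * \<epsilon>))"
      by (rule mult_left_mono[OF claim3]) simp
    also have "\<dots> = ennreal (real (card (Nb::(int^'d) set)) * (T * (2 * dd) powr q * (3 * \<epsilon>)))"
      by (rule ennreal_mult[symmetric]) (use e0 in \<open>auto simp: T_def\<close>)
    also have "\<dots> = ennreal (real (card (Nb::(int^'d) set)) * (T * (2 * dd) powr q) * (3 * \<epsilon>))"
      by (simp add: mult.assoc)
    also have "\<dots> < ennreal \<eta>"
    proof -
      have "0 \<le> real (card (Nb::(int^'d) set)) * (T * (2 * dd) powr q) * (3 * \<epsilon>)"
        using e0 by (simp add: T_def)
      then show ?thesis using e3 by (simp add: T_def dd_def ennreal_less_iff)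
    qed
    finally show ?thesis .
  qed
  show ?thesis using G1 G2 G3 by blast
qed



lemma hausdorff_empty: "hausdorff s {} = 0"
  unfolding null_iff nullcov_def
proof (intro allI impI)
  fix \<delta> \<eta> :: real assume "0 < \<delta>" "0 < \<eta>"
  then show "\<exists>C. (\<forall>i. bounded (C i) \<and> diameter (C i) < \<delta>) \<and> {} \<subseteq> (\<Union>i. C i) \<and> (\<Sum>i. hcontent s (C i)) < ennreal \<eta>"
    by (intro exI[of _ "\<lambda>_. {}"]) (simp add: hcontent_def)
qed

lemma ennreal_pos_ex: "0 < (x::ennreal) \<Longrightarrow> \<exists>k. ennreal (1 / real (Suc k)) < x"
proof (cases "x = \<infinity>")
  case True then show ?thesis by (intro exI[of _ 0]) simp
next
  case False
  assume "0 < x"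
  obtain r where r: "0 \<le> r" "x = ennreal r" using enn_fin[OF False] by blast
  then have "0 < r" using \<open>0 < x\<close> by simp
  then obtain n where "inverse (real (Suc n)) < r" using reals_Archimedean by blast
  then show ?thesis using r by (intro exI[of _ n]) (simp add: ennreal_less_iff divide_inverse)
qed

theorem theorem4p1:
  fixes v :: "real ^ 'n \<Rightarrow> real ^ 'd" and \<tau> \<sigma> :: real
  assumes "0 < \<tau>" and "\<tau> \<le> real CARD('n)" and "0 < \<sigma>"
    and "continuous_on UNIV v"
    and "\<And>E \<epsilon>. hausdorff \<tau> E = 0 \<Longrightarrow> 0 < \<epsilon> \<Longrightarrow>
           \<exists>D :: nat \<Rightarrow> (real ^ 'n) set. (\<forall>i. compact (D i)) \<and> E \<subseteq> (\<Union>i. D i) \<and>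
              (\<Sum>i. ennreal (diameter (D i) powr \<tau>)) < ennreal \<epsilon> \<and>
              (\<Sum>i. ennreal (diameter (v ` D i) powr \<sigma>)) < ennreal \<epsilon>"
  shows "N_star_property \<tau> \<sigma> v"
  unfolding N_star_property_def
proof (intro ballI allI impI)
  note tau = assms(1) and sig = assms(3) and cont = assms(4) and hyp = assms(5)
  fix q and E :: "(real^'n) set" assume q: "q \<in> {0..\<sigma>}" and E0: "hausdorff \<tau> E = 0"
  have cimg: "compact D \<Longrightarrow> compact (v ` D)" for D
    by (rule compact_continuous_image[OF continuous_on_subset[OF cont subset_UNIV]])
  consider "q = 0" | "q = \<sigma>" | "0 < q" "q < \<sigma>" using q by fastforce
  then show "hausdorff q {y. hausdorff (\<tau> * (1 - q / \<sigma>)) (E \<inter> v -` {y}) \<noteq> 0} = 0"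
  proof cases
    case 1
    have "{y. hausdorff (\<tau> * (1 - q / \<sigma>)) (E \<inter> v -` {y}) \<noteq> 0} = {}"
      using null_mono[OF E0] 1 by auto
    then show ?thesis by (simp add: hausdorff_empty)
  next
    case 2
    have "{y. hausdorff (\<tau> * (1 - q / \<sigma>)) (E \<inter> v -` {y}) \<noteq> 0} \<subseteq> v ` E"
    proof
      fix y assume "y \<in> {y. hausdorff (\<tau> * (1 - q / \<sigma>)) (E \<inter> v -` {y}) \<noteq> 0}"
      then have "E \<inter> v -` {y} \<noteq> {}" using hausdorff_empty by force
      then show "y \<in> v ` E" by blast
    qed
    moreover have "hausdorff \<sigma> (v ` E) = 0"
      unfolding null_iff nullcov_def
    proof (intro allI impI)
      fix \<delta> \<eta> :: real assume d: "0 < \<delta>" and e: "0 < \<eta>"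
      define \<epsilon> where "\<epsilon> = min \<eta> (\<delta> powr \<sigma>)"
      have e0: "0 < \<epsilon>" using d e by (simp add: \<epsilon>_def)
      obtain D where D: "\<forall>i. compact (D i)" "E \<subseteq> (\<Union>i. D i)"
        "(\<Sum>i. ennreal (diameter (v ` D i) powr \<sigma>)) < ennreal \<epsilon>"
        using hyp[OF E0 e0] by blast
      have bd: "bounded (v ` D i)" for i using cimg D(1) compact_imp_bounded by blast
      have "diameter (v ` D i) < \<delta>" for i
      proof -
        have "diameter (v ` D i) powr \<sigma> < \<epsilon>"
          using le_less_trans[OF term_le_suminf D(3)] by (simp add: ennreal_less_iff)
        then have "diameter (v ` D i) powr \<sigma> < \<delta> powr \<sigma>" by (simp add: \<epsilon>_def)
        then show ?thesis using powr_less_imp_less[OF diameter_ge_0[OF bd] _ sig] d by simp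
      qed
      moreover have "v ` E \<subseteq> (\<Union>i. v ` D i)" using D(2) by blast
      moreover have "(\<Sum>i. hcontent \<sigma> (v ` D i)) < ennreal \<eta>"
      proof -
        have "(\<Sum>i. hcontent \<sigma> (v ` D i)) = (\<Sum>i. ennreal (diameter (v ` D i) powr \<sigma>))"
          by (simp add: hcontent_pos[OF sig])
        also have "\<dots> < ennreal \<epsilon>" by (rule D(3))
        also have "\<dots> \<le> ennreal \<eta>" by (intro ennreal_leI) (simp add: \<epsilon>_def)
        finally show ?thesis .
      qed
      ultimately show "\<exists>C. (\<forall>i. bounded (C i) \<and> diameter (C i) < \<delta>) \<and> v ` E \<subseteq> (\<Union>i. C i) \<and> (\<Sum>i. hcontent \<sigma> (C i)) < ennreal \<eta>"
        using bd by (intro exI[of _ "\<lambda>i. v ` D i"]) auto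
    qed
    ultimately show ?thesis using null_mono 2 by blast
  next
    case 3
    define s where "s = \<tau> * (1 - q/\<sigma>)"
    have s0: "0 < s" using tau sig 3 by (simp add: s_def field_simps)
    define F where "F k = {y. ennreal (1 / real (Suc k)) < hausdorff_pre s 1 (E \<inter> v -` {y})}" for k
    have sub: "{y. hausdorff s (E \<inter> v -` {y}) \<noteq> 0} \<subseteq> (\<Union>k. F k)"
    proof
      fix y assume "y \<in> {y. hausdorff s (E \<inter> v -` {y}) \<noteq> 0}"
      then have "hausdorff_pre s 1 (E \<inter> v -` {y}) \<noteq> 0" using pre1_nonzero[OF s0] by blast
      then have "0 < hausdorff_pre s 1 (E \<inter> v -` {y})" by (simp add: zero_less_iff_neq_zero)
      then obtain k where "ennreal (1 / real (Suc k)) < hausdorff_pre s 1 (E \<inter> v -` {y})"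
        using ennreal_pos_ex by blast
      then show "y \<in> (\<Union>k. F k)" by (auto simp: F_def)
    qed
    have "hausdorff q (F k) = 0" for k
      unfolding null_iff nullcov_def
    proof (intro allI impI)
      fix \<delta> \<eta> :: real assume d: "0 < \<delta>" and e: "0 < \<eta>"
      define dd where "dd = real CARD('d)"
      have dd1: "1 \<le> dd" by (simp add: dd_def)
      obtain L0 where L0': "(1/2::real)^L0 < \<delta> / dd"
        using real_arch_pow_inv[of "\<delta> / dd" "1/2"] d dd1 by auto
      have L0: "real CARD('d) * (1/2)^L0 < \<delta>" using L0' dd1 by (simp add: dd_def field_simps)
      define M where "M = real (card (Nb::(int^'d) set))"
      define K where "K = real (Suc k) * (2 * dd) powr q"
      have M0: "0 \<le> M" and K0: "0 \<le> K" by (simp_all add: M_def K_def)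
      define \<epsilon> where "\<epsilon> = min 1 (min (((1/2)^L0) powr \<sigma>) (\<eta> / (4 * (M+1) * (K+1))))"
      have e0: "0 < \<epsilon>" using e M0 K0 by (simp add: \<epsilon>_def)
      have e1: "\<epsilon> \<le> 1" and e2: "\<epsilon> \<le> ((1/2)^L0) powr \<sigma>" by (simp_all add: \<epsilon>_def)
      have e4: "\<epsilon> \<le> \<eta> / (4 * (M+1) * (K+1))" by (simp add: \<epsilon>_def)
      have e3: "M * K * (3 * \<epsilon>) < \<eta>"
      proof -
        have "M * K \<le> (M+1) * (K+1)" using M0 K0 by (simp add: algebra_simps)
        then have "M * K * (3 * \<epsilon>) \<le> (M+1) * (K+1) * (3 * \<epsilon>)" using e0 by (intro mult_right_mono) auto
        also have "\<dots> \<le> (M+1) * (K+1) * (3 * (\<eta> / (4 * (M+1) * (K+1))))"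
          using e4 M0 K0 by (intro mult_left_mono) auto
        also have "\<dots> = 3 * \<eta> / 4"
        proof -
          define X where "X = (M+1) * (K+1)"
          have X0: "X \<noteq> 0" using M0 K0 by (simp add: X_def)
          have "4 * (M+1) * (K+1) = 4 * X" by (simp add: X_def)
          then show ?thesis using X0 unfolding X_def[symmetric] by (simp add: field_simps)
        qed
        also have "\<dots> < \<eta>" using e by simp
        finally show ?thesis .
      qed
      obtain D where D: "\<forall>i. compact (D i)" "E \<subseteq> (\<Union>i. D i)"
        "(\<Sum>i. ennreal (diameter (D i) powr \<tau>)) < ennreal \<epsilon>"
        "(\<Sum>i. ennreal (diameter (v ` D i) powr \<sigma>)) < ennreal \<epsilon>"
        using hyp[OF E0 e0] by blast
      have "\<exists>C. (\<forall>i. bounded (C i) \<and> diameter (C i) < \<delta>) \<and>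
        {y. ennreal (1 / real (Suc k)) < hausdorff_pre (\<tau> * (1 - q/\<sigma>)) 1 (E \<inter> v -` {y})} \<subseteq> (\<Union>i. C i) \<and>
        (\<Sum>i. hcontent q (C i)) < ennreal \<eta>"
        by (rule Fk_cover[OF tau sig 3(1) 3(2) cont _ D(2) D(3) D(4) L0 e0 e1 e2])
           (use D(1) e3 in \<open>simp_all add: M_def K_def dd_def\<close>)
      then show "\<exists>C. (\<forall>i. bounded (C i) \<and> diameter (C i) < \<delta>) \<and> F k \<subseteq> (\<Union>i. C i) \<and> (\<Sum>i. hcontent q (C i)) < ennreal \<eta>"
        by (simp add: F_def s_def)
    qed
    then have "hausdorff q (\<Union>k. F k) = 0" by (rule null_Union)
    then show ?thesis using null_mono sub by (simp add: s_def)
  qed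
qed


end
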